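(* Let $R$ be a $*$-ring and $a\in R$. If $a$ is strongly $*$-regular, then $a$ is strongly $\pi$-$*$-regular; and if $a$ is strongly $\pi$-$*$-regular, then $a$ is strongly $*$-clean.
   Context: A $*$-ring is a ring with identity with an involution $*$. A projection is $p$ with $p^2=p=p^*$. $a$ is strongly $*$-regular if $a=pu=up$ for a projection $p$ and a unit $u$. $a$ is strongly $\pi$-$*$-regular if there exist a projection $e$, a unit $u$ and $m\ge1$ with $a^m=eu$ and $a,e,u$ pairwise commuting. $a$ is strongly $*$-clean if $a=p+u$ with $p$ a projection, $u$ a unit and $pu=up$. *)

theory Defs
  imports Main
begin

locale star_ring =
  fixes star :: "'a::ring_1 \<Rightarrow> 'a"
  assumes star_add: "star (x + y) = star x + star y"
    and star_mult: "star (x * y) = star y * star x"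
    and star_star: "star (star x) = x"

definition is_unit :: "'a::ring_1 \<Rightarrow> bool" where
  "is_unit u \<longleftrightarrow> (\<exists>v. u * v = 1 \<and> v * u = 1)"

definition projection :: "('a::ring_1 \<Rightarrow> 'a) \<Rightarrow> 'a \<Rightarrow> bool" where
  "projection star p \<longleftrightarrow> p * p = p \<and> star p = p"

definition strongly_star_regular :: "('a::ring_1 \<Rightarrow> 'a) \<Rightarrow> 'a \<Rightarrow> bool" where
  "strongly_star_regular star a \<longleftrightarrow>
     (\<exists>p u. projection star p \<and> is_unit u \<and> a = p * u \<and> a = u * p)"

definition strongly_pi_star_regular :: "('a::ring_1 \<Rightarrow> 'a) \<Rightarrow> 'a \<Rightarrow> bool" where
  "strongly_pi_star_regular star a \<longleftrightarrow>
     (\<exists>e u (m::nat). m \<ge> 1 \<and> projection star e \<and> is_unit u \<and> a ^ m = e * u \<and>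
        a * e = e * a \<and> a * u = u * a \<and> e * u = u * e)"

definition strongly_star_clean :: "('a::ring_1 \<Rightarrow> 'a) \<Rightarrow> 'a \<Rightarrow> bool" where
  "strongly_star_clean star a \<longleftrightarrow>
     (\<exists>p u. projection star p \<and> is_unit u \<and> a = p + u \<and> p * u = u * p)"

end

theory Submission
  imports Defs
begin

definition cm :: "'a::ring_1 \<Rightarrow> 'a \<Rightarrow> bool" where "cm x y \<longleftrightarrow> x * y = y * x"

lemma cm_sym: "cm x y \<Longrightarrow> cm y x" by (simp add: cm_def)
lemma cm_one: "cm x 1" by (simp add: cm_def)
lemma cm_zero: "cm x 0" by (simp add: cm_def)
lemma cm_refl: "cm x x" by (simp add: cm_def)
lemma cm_mult: "cm x y \<Longrightarrow> cm x z \<Longrightarrow> cm x (y*z)"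
  unfolding cm_def by (metis mult.assoc)
lemma cm_add: "cm x y \<Longrightarrow> cm x z \<Longrightarrow> cm x (y+z)"
  unfolding cm_def by (simp add: distrib_left distrib_right)
lemma cm_diff: "cm x y \<Longrightarrow> cm x z \<Longrightarrow> cm x (y-z)"
  unfolding cm_def by (simp add: left_diff_distrib right_diff_distrib)
lemma cm_uminus: "cm x y \<Longrightarrow> cm x (-y)"
  unfolding cm_def by simp
lemma cm_power: "cm x y \<Longrightarrow> cm x (y^k)"
  by (induction k) (auto intro: cm_mult cm_one)
lemma cm_sum: "(\<And>k. k < (m::nat) \<Longrightarrow> cm x (g k)) \<Longrightarrow> cm (x::'a::ring_1) (\<Sum>k<m. g k)"
proof (induct m)
  case 0 show ?case by (simp add: cm_zero)
next
  case (Suc m) then show ?case by (auto intro!: cm_add)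
qed

lemma pow_mult_cm: "cm x y \<Longrightarrow> (x*y)^k = x^k * y^k"
proof (induction k)
  case 0 then show ?case by simp
next
  case (Suc k)
  have c: "y * x^k = x^k * y" using cm_power[OF cm_sym[OF Suc.prems]] by (simp add: cm_def)
  have "(x*y)^Suc k = x * (y * x^k) * y^k" using Suc by (simp add: mult.assoc)
  also have "\<dots> = x^Suc k * y^Suc k" using c by (simp add: mult.assoc)
  finally show ?case .
qed

lemma idem_pow: "(f::'a::ring_1)*f = f \<Longrightarrow> k \<ge> 1 \<Longrightarrow> f^k = f"
proof (induction k)
  case 0 then show ?case by simp
next
  case (Suc k) then show ?case by (cases k) auto
qed

lemma geom: "(1 - x) * (\<Sum>k<m. x^k) = 1 - (x::'a::ring_1)^m"
proof (induction m)
  case 0 then show ?case by simp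
next
  case (Suc m)
  have "(1 - x) * (\<Sum>k<Suc m. x^k) = (1 - x) * (\<Sum>k<m. x^k) + (1-x) * x^m"
    by (simp add: distrib_left)
  also have "\<dots> = 1 - x^Suc m" using Suc by (simp add: left_diff_distrib power_Suc)
  finally show ?case .
qed

lemma (in star_ring) star_diff: "star (x - y) = star x - star y"
  using star_add[of "x - y" y] by (simp add: eq_diff_eq)

lemma (in star_ring) star_one: "star 1 = 1"
  by (metis mult_1_left mult_1_right star_mult star_star)

lemma part1:
  assumes "strongly_star_regular star a" shows "strongly_pi_star_regular star a"
proof -
  obtain p u where p: "projection star p" and u: "is_unit u" and a1: "a = p * u" and a2: "a = u * p"
    using assms unfolding strongly_star_regular_def by blast
  have pp: "p*p = p" using p by (simp add: projection_def)
  have "a * p = a" using a2 pp by (simp add: mult.assoc)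
  moreover have "p * a = a" using a1 pp by (simp add: mult.assoc[symmetric])
  moreover have "a * u = u * a" using a1 a2 by (metis mult.assoc)
  ultimately show ?thesis unfolding strongly_pi_star_regular_def
    using p u a1 a2 by (intro exI[of _ p] exI[of _ u] exI[of _ "1::nat"]) auto
qed

lemma part2:
  assumes st: "star_ring star" and "strongly_pi_star_regular star a"
  shows "strongly_star_clean star a"
proof -
  obtain e u and m :: nat where m: "m \<ge> 1" and pe: "projection star e" and u: "is_unit u"
    and am: "a^m = e*u" and ae: "a*e = e*a" and au: "a*u = u*a" and eu: "e*u = u*e"
    using assms(2) unfolding strongly_pi_star_regular_def by blast
  obtain v where uv: "u*v = 1" and vu: "v*u = 1" using u unfolding is_unit_def by blast
  have ee: "e*e = e" and se: "star e = e" using pe by (auto simp: projection_def)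
  have cae: "cm a e" "cm e a" using ae by (auto simp: cm_def)
  have cau: "cm a u" using au by (simp add: cm_def)
  have ceu: "cm e u" "cm u e" using eu by (auto simp: cm_def)
  have cav: "cm a v" unfolding cm_def
    by (metis au mult.assoc mult_1_left mult_1_right uv vu)
  have cev: "cm e v" unfolding cm_def
    by (metis eu mult.assoc mult_1_left mult_1_right uv vu)
  define f where "f = 1 - e"
  have ef: "e*f = 0" "f*e = 0" using ee by (auto simp: f_def right_diff_distrib left_diff_distrib)
  have ff: "f*f = f" using ef by (simp add: f_def left_diff_distrib)
  have cf: "cm a f" "cm e f" "cm v f" "cm u f" unfolding f_def
    using cae ceu cev cm_sym[OF cav] cm_sym[OF cau]
    by (auto intro!: cm_diff cm_one cm_refl dest: cm_sym)
  define n where "n = a * f"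
  have cn: "cm a n" "cm e n" "cm f n" "cm v n" unfolding n_def
    using cf cae cev cm_sym[OF cf(1)] cm_sym[OF cf(3)] cm_sym[OF cav]
    by (auto intro!: cm_mult cm_refl)
  have "a^m * f = 0"
  proof -
    have "a^m * f = e * (u * f)" by (simp add: am mult.assoc)
    also have "\<dots> = (e*f) * u" using cf(4) by (simp add: cm_def mult.assoc)
    finally show ?thesis using ef by simp
  qed
  hence nm: "n^m = 0" unfolding n_def using pow_mult_cm[OF cf(1)] idem_pow[OF ff m] by simp
  define s where "s = (\<Sum>k<m. n^k)"
  have cs: "cm e s" "cm f s" "cm n s" unfolding s_def
    using cn by (auto intro!: cm_sum cm_power cm_refl)
  have cas: "cm a s" unfolding s_def using cn by (auto intro!: cm_sum cm_power)
  define w where "w = e * v * a^(m-1)"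
  define g where "g = - (s * f)"
  define y where "y = a - f"
  define x where "x = w + g"
  have yx_comm: "cm y x"
  proof -
    have c1: "cm a x" unfolding x_def w_def g_def
      using cae cav cf cas by (auto intro!: cm_add cm_diff cm_mult cm_power cm_uminus cm_sum cm_refl)
    have c2: "cm f x" unfolding x_def w_def g_def
      by (intro cm_add cm_uminus cm_mult cm_power cm_sym[OF cf(2)] cm_sym[OF cf(3)] cm_sym[OF cf(1)] cs(2) cm_refl)
    show ?thesis unfolding y_def by (rule cm_sym, rule cm_diff, rule cm_sym[OF c1], rule cm_sym[OF c2])
  qed
  have ysplit: "y = a*e + (n - f)"
  proof -
    have "a = a*e + a*f" by (simp add: f_def right_diff_distrib)
    thus ?thesis by (simp add: y_def n_def)
  qed
  have ne: "n*e = 0" unfolding n_def using ef by (simp add: mult.assoc)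
  have t1: "a*e*w = e"
  proof -
    have am1: "a * a^(m-1) = a^m" using m by (metis Suc_diff_1 less_le_trans zero_less_one power_Suc)
    have "a*e*w = (a*e)*(e*v*a^(m-1))" unfolding w_def ..
    also have "\<dots> = e*a*v*a^(m-1)" by (metis ee ae mult.assoc)
    also have "\<dots> = e*v*(a*a^(m-1))" using cav unfolding cm_def by (simp add: mult.assoc)
    also have "\<dots> = e*(v*e)*u" unfolding am1 am by (simp add: mult.assoc)
    also have "\<dots> = e*(v*u)" using cev ee unfolding cm_def by (metis mult.assoc)
    finally show ?thesis using vu by simp
  qed
  have t2: "a*e*g = 0"
  proof -
    have "e*g = - (s * (e*f))" unfolding g_def using cs(1) unfolding cm_def by (simp add: mult.assoc[symmetric])
    thus ?thesis using ef by (simp add: mult.assoc)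
  qed
  have t3: "(n - f) * w = 0" unfolding w_def using ne ef
    by (simp add: left_diff_distrib mult.assoc[symmetric])
  have t4: "(n - f) * g = f"
  proof -
    have fn: "f*n = n" using cf(1) ff unfolding n_def cm_def by (metis mult.assoc)
    have "(n - f) * g = ((f - n) * s) * f" unfolding g_def
      by (simp add: mult.assoc left_diff_distrib right_diff_distrib)
    also have "(f - n) * s = f * ((1 - n) * s)"
      by (simp add: fn mult.assoc[symmetric] right_diff_distrib)
    also have "(1-n)*s = 1" unfolding s_def using geom[of n m] nm by simp
    finally show ?thesis using ff by simp
  qed
  have yx: "y * x = 1" unfolding ysplit x_def
    using t1 t2 t3 t4 by (simp add: distrib_left distrib_right f_def)
  have xy: "x * y = 1" using yx yx_comm by (simp add: cm_def)
  have pf: "projection star f" using st ee se ef ff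
    by (simp add: projection_def f_def star_ring.star_diff star_ring.star_one)
  show ?thesis unfolding strongly_star_clean_def
    apply (rule exI[of _ f], rule exI[of _ y])
    using pf xy yx cf(1) unfolding is_unit_def y_def cm_def
    by (auto simp: left_diff_distrib right_diff_distrib)
qed

theorem corollary3p4:
  fixes star :: "'a::ring_1 \<Rightarrow> 'a" and a :: 'a
  assumes "star_ring star"
  shows "(strongly_star_regular star a \<longrightarrow> strongly_pi_star_regular star a) \<and>
         (strongly_pi_star_regular star a \<longrightarrow> strongly_star_clean star a)"
  using part1 part2 assms by blast

end
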